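(* Let $\Bbbk$ be a field with $\operatorname{char}\Bbbk\neq 2$. Let $I$ be the ideal of the Jordan dialgebra $\mathrm{DiSJ}\langle x,y\rangle$ generated by the element $k=\tfrac12(\dot x x+x\dot x)-\tfrac12(\dot y y+y\dot y)$. Then the quotient dialgebra $\mathrm{DiSJ}\langle x,y\rangle/I$ is exceptional, i.e. it is not isomorphic to a subdialgebra of $D^{(+)}$ for any associative dialgebra $D$.
   Context: A dialgebra is a vector space with two bilinear operations $\vdash,\dashv$. It is associative if $(x\dashv y)\vdash z=(x\vdash y)\vdash z$, $x\dashv(y\vdash z)=x\dashv(y\dashv z)$, $(x\vdash y)\vdash z=x\vdash(y\vdash z)$, $(x\dashv y)\dashv z=x\dashv(y\dashv z)$, $(x\vdash y)\dashv z=x\vdash(y\dashv z)$. The free associative dialgebra $\mathrm{DiAs}\langle X\rangle$ has basis the words $x_1\cdots\dot x_k\cdots x_n$ meaning $x_1\vdash\cdots\vdash x_{k-1}\vdash x_k\dashv x_{k+1}\dashv\cdots\dashv x_n$ (so $\dot x x=x\dashv x$, $x\dot x=x\vdash x$). For an associative dialgebra $D$, $D^{(+)}$ is $D$ with $a\vdash_+b=\tfrac12(a\vdash b+b\dashv a)$, $a\dashv_+b=\tfrac12(a\dashv b+b\vdash a)$. $\mathrm{DiSJ}\langle x,y\rangle$ is the subdialgebra of $\mathrm{DiAs}\langle x,y\rangle^{(+)}$ generated by $x,y$; ideals are taken with respect to $\vdash_+,\dashv_+$. *)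

theory Defs
  imports Complex_Main
begin

definition bilinear_op :: "('k::field \<Rightarrow> 'd::ab_group_add \<Rightarrow> 'd) \<Rightarrow> ('d \<Rightarrow> 'd \<Rightarrow> 'd) \<Rightarrow> bool" where
  "bilinear_op smul m \<longleftrightarrow>
     (\<forall>a b c. m (a + b) c = m a c + m b c) \<and>
     (\<forall>a b c. m a (b + c) = m a b + m a c) \<and>
     (\<forall>s a b. m (smul s a) b = smul s (m a b)) \<and>
     (\<forall>s a b. m a (smul s b) = smul s (m a b))"

text \<open>dl a b means a |- b, dr a b means a -| b.\<close>
definition assoc_dialgebra ::
  "('k::field \<Rightarrow> 'd::ab_group_add \<Rightarrow> 'd) \<Rightarrow> ('d \<Rightarrow> 'd \<Rightarrow> 'd) \<Rightarrow> ('d \<Rightarrow> 'd \<Rightarrow> 'd) \<Rightarrow> bool" where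
  "assoc_dialgebra smul dl dr \<longleftrightarrow>
     Vector_Spaces.vector_space smul \<and> bilinear_op smul dl \<and> bilinear_op smul dr \<and>
     (\<forall>x y z. dl (dr x y) z = dl (dl x y) z) \<and>
     (\<forall>x y z. dr x (dl y z) = dr x (dr y z)) \<and>
     (\<forall>x y z. dl (dl x y) z = dl x (dl y z)) \<and>
     (\<forall>x y z. dr (dr x y) z = dr x (dr y z)) \<and>
     (\<forall>x y z. dr (dl x y) z = dl x (dr y z))"

definition plus_l :: "('k::field \<Rightarrow> 'd::ab_group_add \<Rightarrow> 'd) \<Rightarrow> ('d \<Rightarrow> 'd \<Rightarrow> 'd) \<Rightarrow> ('d \<Rightarrow> 'd \<Rightarrow> 'd) \<Rightarrow> 'd \<Rightarrow> 'd \<Rightarrow> 'd" where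
  "plus_l smul dl dr a b = smul (inverse 2) (dl a b + dr b a)"

definition plus_r :: "('k::field \<Rightarrow> 'd::ab_group_add \<Rightarrow> 'd) \<Rightarrow> ('d \<Rightarrow> 'd \<Rightarrow> 'd) \<Rightarrow> ('d \<Rightarrow> 'd \<Rightarrow> 'd) \<Rightarrow> 'd \<Rightarrow> 'd \<Rightarrow> 'd" where
  "plus_r smul dl dr a b = smul (inverse 2) (dr a b + dl b a)"

text \<open>Basis: pairs (w, i) with w a nonempty word over the alphabet {x,y} (x = False,
 y = True) and i < length w the position of the dot, i.e. the word
 w_0 |- ... |- w_(i-1) |- w_i -| w_(i+1) -| ... -| w_(n-1).
 Elements are coefficient functions on these pairs; every element we ever form
 (the ones generated from x and y) is finitely supported on valid basis pairs.\<close>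

type_synonym 'k dias = "bool list \<times> nat \<Rightarrow> 'k"

definition dzero :: "'k::field dias" where "dzero = (\<lambda>_. 0)"
definition dadd :: "'k::field dias \<Rightarrow> 'k dias \<Rightarrow> 'k dias" where
  "dadd f g = (\<lambda>b. f b + g b)"
definition dsub :: "'k::field dias \<Rightarrow> 'k dias \<Rightarrow> 'k dias" where
  "dsub f g = (\<lambda>b. f b - g b)"
definition dscale :: "'k::field \<Rightarrow> 'k dias \<Rightarrow> 'k dias" where
  "dscale c f = (\<lambda>b. c * f b)"

definition dgen :: "bool \<Rightarrow> 'k::field dias" where
  "dgen a = (\<lambda>(w, i). if w = [a] \<and> i = 0 then 1 else 0)"

text \<open>Bilinear extension of (u,i) |- (v,j) = (u v, |u| + j) (dot in the right factor).\<close>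
definition dvdash :: "'k::field dias \<Rightarrow> 'k dias \<Rightarrow> 'k dias" where
  "dvdash f g = (\<lambda>(w, k). \<Sum>m\<in>{1..<length w}.
      if m \<le> k then (\<Sum>i<m. f (take m w, i)) * g (drop m w, k - m) else 0)"

text \<open>Bilinear extension of (u,i) -| (v,j) = (u v, i) (dot in the left factor).\<close>
definition ddashv :: "'k::field dias \<Rightarrow> 'k dias \<Rightarrow> 'k dias" where
  "ddashv f g = (\<lambda>(w, k). \<Sum>m\<in>{1..<length w}.
      if k < m then f (take m w, k) * (\<Sum>j<length w - m. g (drop m w, j)) else 0)"

definition jl :: "'k::field dias \<Rightarrow> 'k dias \<Rightarrow> 'k dias" where
  "jl a b = dscale (inverse 2) (dadd (dvdash a b) (ddashv b a))"
definition jr :: "'k::field dias \<Rightarrow> 'k dias \<Rightarrow> 'k dias" where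
  "jr a b = dscale (inverse 2) (dadd (ddashv a b) (dvdash b a))"

inductive_set DiSJ :: "'k::field dias set" where
  gen_x: "dgen False \<in> DiSJ"
| gen_y: "dgen True \<in> DiSJ"
| zero: "dzero \<in> DiSJ"
| add: "a \<in> DiSJ \<Longrightarrow> b \<in> DiSJ \<Longrightarrow> dadd a b \<in> DiSJ"
| scale: "a \<in> DiSJ \<Longrightarrow> dscale c a \<in> DiSJ"
| opl: "a \<in> DiSJ \<Longrightarrow> b \<in> DiSJ \<Longrightarrow> jl a b \<in> DiSJ"
| opr: "a \<in> DiSJ \<Longrightarrow> b \<in> DiSJ \<Longrightarrow> jr a b \<in> DiSJ"

text \<open>The element k = 1/2 (x. x + x x.) - 1/2 (y. y + y y.), where x. x = x -| x and
 x x. = x |- x in DiAs<x,y>.\<close>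
definition kelem :: "'k::field dias" where
  "kelem = dsub
     (dscale (inverse 2) (dadd (ddashv (dgen False) (dgen False)) (dvdash (dgen False) (dgen False))))
     (dscale (inverse 2) (dadd (ddashv (dgen True) (dgen True)) (dvdash (dgen True) (dgen True))))"

inductive_set Iideal :: "'k::field dias set" where
  gen: "kelem \<in> Iideal"
| zero: "dzero \<in> Iideal"
| add: "a \<in> Iideal \<Longrightarrow> b \<in> Iideal \<Longrightarrow> dadd a b \<in> Iideal"
| scale: "a \<in> Iideal \<Longrightarrow> dscale c a \<in> Iideal"
| ml: "a \<in> DiSJ \<Longrightarrow> i \<in> Iideal \<Longrightarrow> jl a i \<in> Iideal"
| mr: "a \<in> DiSJ \<Longrightarrow> i \<in> Iideal \<Longrightarrow> jl i a \<in> Iideal"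
| nl: "a \<in> DiSJ \<Longrightarrow> i \<in> Iideal \<Longrightarrow> jr a i \<in> Iideal"
| nr: "a \<in> DiSJ \<Longrightarrow> i \<in> Iideal \<Longrightarrow> jr i a \<in> Iideal"

definition coset :: "'k::field dias \<Rightarrow> 'k dias set" where
  "coset a = {b. dsub b a \<in> Iideal}"

definition Quot :: "'k::field dias set set" where
  "Quot = coset ` DiSJ"

definition rep :: "'k::field dias set \<Rightarrow> 'k dias" where
  "rep A = (SOME a. a \<in> A)"

definition qadd :: "'k::field dias set \<Rightarrow> 'k dias set \<Rightarrow> 'k dias set" where
  "qadd A B = coset (dadd (rep A) (rep B))"
definition qscale :: "'k::field \<Rightarrow> 'k dias set \<Rightarrow> 'k dias set" where
  "qscale c A = coset (dscale c (rep A))"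
definition ql :: "'k::field dias set \<Rightarrow> 'k dias set \<Rightarrow> 'k dias set" where
  "ql A B = coset (jl (rep A) (rep B))"
definition qr :: "'k::field dias set \<Rightarrow> 'k dias set \<Rightarrow> 'k dias set" where
  "qr A B = coset (jr (rep A) (rep B))"

text \<open>An injective dialgebra homomorphism from DiSJ<x,y>/I into D^(+), i.e. an isomorphism
 of DiSJ<x,y>/I onto a subdialgebra of D^(+).\<close>
definition embeds_into_plus ::
  "('k::field \<Rightarrow> 'd::ab_group_add \<Rightarrow> 'd) \<Rightarrow> ('d \<Rightarrow> 'd \<Rightarrow> 'd) \<Rightarrow> ('d \<Rightarrow> 'd \<Rightarrow> 'd) \<Rightarrow> bool" where
  "embeds_into_plus smul dl dr \<longleftrightarrow>
    (\<exists>\<phi> :: 'k dias set \<Rightarrow> 'd.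
       inj_on \<phi> Quot \<and>
       (\<forall>A\<in>Quot. \<forall>B\<in>Quot. \<phi> (qadd A B) = \<phi> A + \<phi> B) \<and>
       (\<forall>c. \<forall>A\<in>Quot. \<phi> (qscale c A) = smul c (\<phi> A)) \<and>
       (\<forall>A\<in>Quot. \<forall>B\<in>Quot. \<phi> (ql A B) = plus_l smul dl dr (\<phi> A) (\<phi> B)) \<and>
       (\<forall>A\<in>Quot. \<forall>B\<in>Quot. \<phi> (qr A B) = plus_r smul dl dr (\<phi> A) (\<phi> B)))"

end

theory Submission
  imports Defs
begin


definition agree :: "'k::field dias \<Rightarrow> 'k dias \<Rightarrow> nat \<Rightarrow> bool" where
  "agree f g n \<longleftrightarrow> (\<forall>u i. length u = n \<longrightarrow> i < n \<longrightarrow> f (u,i) = g (u,i))"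

abbreviation zeroat :: "'k::field dias \<Rightarrow> nat \<Rightarrow> bool" where
  "zeroat f n \<equiv> agree f dzero n"

definition splitcond :: "'k::field dias \<Rightarrow> 'k dias \<Rightarrow> 'k dias \<Rightarrow> 'k dias \<Rightarrow> nat \<Rightarrow> bool" where
  "splitcond f g f' g' n \<longleftrightarrow> (\<forall>m1 m2. 1 \<le> m1 \<longrightarrow> 1 \<le> m2 \<longrightarrow> m1 + m2 = n \<longrightarrow>
     (agree f f' m1 \<and> agree g g' m2) \<or> (zeroat f m1 \<and> zeroat f' m1) \<or> (zeroat g m2 \<and> zeroat g' m2))"

lemma loc_dvdash:
  assumes "length w = n" "k < n" "splitcond f g f' g' n"
  shows "dvdash f g (w,k) = dvdash f' g' (w,k)"
  unfolding dvdash_def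
proof (simp, rule sum.cong[OF refl])
  fix m assume m: "m \<in> {Suc 0..<length w}"
  have c: "(agree f f' m \<and> agree g g' (n-m)) \<or> (zeroat f m \<and> zeroat f' m) \<or> (zeroat g (n-m) \<and> zeroat g' (n-m))"
    using assms(3) m assms(1) unfolding splitcond_def by (metis atLeastLessThan_iff le_add_diff_inverse less_imp_le_nat zero_less_diff Suc_leI  One_nat_def)
  have lt: "length (take m w) = m" "length (drop m w) = n - m" using m assms(1) by auto
  show "(if m \<le> k then (\<Sum>i<m. f (take m w, i)) * g (drop m w, k - m) else 0) =
        (if m \<le> k then (\<Sum>i<m. f' (take m w, i)) * g' (drop m w, k - m) else 0)"
  proof (cases "m \<le> k")
    case True
    have kk: "k - m < n - m" using True assms(2) by auto
    from c show ?thesis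
    proof (elim disjE conjE)
      assume a1: "agree f f' m" and a2: "agree g g' (n-m)"
      have "(\<Sum>i<m. f (take m w, i)) = (\<Sum>i<m. f' (take m w, i))"
        using a1 lt unfolding agree_def by (intro sum.cong) auto
      moreover have "g (drop m w, k - m) = g' (drop m w, k - m)" using a2 lt kk unfolding agree_def by auto
      ultimately show ?thesis by simp
    next
      assume a1: "zeroat f m" and a2: "zeroat f' m"
      have "(\<Sum>i<m. f (take m w, i)) = 0" "(\<Sum>i<m. f' (take m w, i)) = 0"
        using a1 a2 lt unfolding agree_def dzero_def by (auto intro!: sum.neutral)
      then show ?thesis by simp
    next
      assume a1: "zeroat g (n-m)" and a2: "zeroat g' (n-m)"
      then have "g (drop m w, k - m) = 0" "g' (drop m w, k - m) = 0" using lt kk unfolding agree_def dzero_def by auto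
      then show ?thesis by simp
    qed
  qed simp
qed

lemma loc_ddashv:
  assumes "length w = n" "k < n" "splitcond f g f' g' n"
  shows "ddashv g f (w,k) = ddashv g' f' (w,k)"
  unfolding ddashv_def
proof (simp, rule sum.cong[OF refl])
  fix m assume m: "m \<in> {Suc 0..<length w}"
  have c: "(agree f f' (n-m) \<and> agree g g' m) \<or> (zeroat f (n-m) \<and> zeroat f' (n-m)) \<or> (zeroat g m \<and> zeroat g' m)"
    using assms(3) m assms(1) unfolding splitcond_def
    by (metis atLeastLessThan_iff le_add_diff_inverse2 less_imp_le_nat zero_less_diff Suc_leI One_nat_def)
  have lt: "length (take m w) = m" "length (drop m w) = n - m" using m assms(1) by auto
  show "(if k < m then g (take m w, k) * (\<Sum>j<length w - m. f (drop m w, j)) else 0) =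
        (if k < m then g' (take m w, k) * (\<Sum>j<length w - m. f' (drop m w, j)) else 0)"
  proof (cases "k < m")
    case True
    from c show ?thesis
    proof (elim disjE conjE)
      assume a1: "agree f f' (n-m)" and a2: "agree g g' m"
      have "(\<Sum>j<length w - m. f (drop m w, j)) = (\<Sum>j<length w - m. f' (drop m w, j))"
        using a1 lt assms(1) unfolding agree_def by (intro sum.cong) auto
      moreover have "g (take m w, k) = g' (take m w, k)" using a2 lt True unfolding agree_def by auto
      ultimately show ?thesis by simp
    next
      assume a1: "zeroat f (n-m)" and a2: "zeroat f' (n-m)"
      have "(\<Sum>j<length w - m. f (drop m w, j)) = 0" "(\<Sum>j<length w - m. f' (drop m w, j)) = 0"
        using a1 a2 lt assms(1) unfolding agree_def dzero_def by (auto intro!: sum.neutral)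
      then show ?thesis by simp
    next
      assume a1: "zeroat g m" and a2: "zeroat g' m"
      then have "g (take m w, k) = 0" "g' (take m w, k) = 0" using lt True unfolding agree_def dzero_def by auto
      then show ?thesis by simp
    qed
  qed simp
qed

lemma loc_jl:
  assumes "length w = n" "k < n" "splitcond f g f' g' n"
  shows "jl f g (w,k) = jl f' g' (w,k)"
  using loc_dvdash[OF assms] loc_ddashv[OF assms] by (simp add: jl_def dscale_def dadd_def)



lemma dvdash_add1: "dvdash (dadd f g) h = dadd (dvdash f h) (dvdash g h)"
  apply (auto simp: fun_eq_iff dvdash_def dadd_def sum.distrib[symmetric] intro!: sum.cong)
  apply (simp_all add: sum.distrib algebra_simps)
  done
lemma dvdash_add2: "dvdash h (dadd f g) = dadd (dvdash h f) (dvdash h g)"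
  by (auto simp: fun_eq_iff dvdash_def dadd_def sum.distrib[symmetric] algebra_simps intro!: sum.cong)
lemma dvdash_sc1: "dvdash (dscale c f) h = dscale c (dvdash f h)"
  by (auto simp: fun_eq_iff dvdash_def dscale_def sum_distrib_left algebra_simps intro!: sum.cong)
lemma dvdash_sc2: "dvdash h (dscale c f) = dscale c (dvdash h f)"
  by (auto simp: fun_eq_iff dvdash_def dscale_def sum_distrib_left algebra_simps intro!: sum.cong)
lemma ddashv_add1: "ddashv (dadd f g) h = dadd (ddashv f h) (ddashv g h)"
  by (auto simp: fun_eq_iff ddashv_def dadd_def sum.distrib[symmetric] algebra_simps intro!: sum.cong)
lemma ddashv_add2: "ddashv h (dadd f g) = dadd (ddashv h f) (ddashv h g)"
  apply (auto simp: fun_eq_iff ddashv_def dadd_def sum.distrib[symmetric] intro!: sum.cong)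
  apply (simp_all add: sum.distrib algebra_simps)
  done
lemma ddashv_sc1: "ddashv (dscale c f) h = dscale c (ddashv f h)"
  by (auto simp: fun_eq_iff ddashv_def dscale_def sum_distrib_left algebra_simps intro!: sum.cong)
lemma ddashv_sc2: "ddashv h (dscale c f) = dscale c (ddashv h f)"
  by (auto simp: fun_eq_iff ddashv_def dscale_def sum_distrib_left algebra_simps intro!: sum.cong)

lemma jl_add1: "jl (dadd f g) h = dadd (jl f h) (jl g h)"
  by (simp add: jl_def dvdash_add1 ddashv_add2) (simp add: fun_eq_iff dadd_def dscale_def algebra_simps)
lemma jl_add2: "jl h (dadd f g) = dadd (jl h f) (jl h g)"
  by (simp add: jl_def dvdash_add2 ddashv_add1) (simp add: fun_eq_iff dadd_def dscale_def algebra_simps)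
lemma jl_sc1: "jl (dscale c f) h = dscale c (jl f h)"
  by (simp add: jl_def dvdash_sc1 ddashv_sc2) (simp add: fun_eq_iff dadd_def dscale_def algebra_simps)
lemma jl_sc2: "jl h (dscale c f) = dscale c (jl h f)"
  by (simp add: jl_def dvdash_sc2 ddashv_sc1) (simp add: fun_eq_iff dadd_def dscale_def algebra_simps)

lemma dscale_0: "dscale 0 f = dzero" by (simp add: dscale_def dzero_def fun_eq_iff)
lemma jl_zero1: "jl dzero h = dzero"
  using jl_sc1[of 0 dzero h] by (simp add: dscale_0)
lemma jl_zero2: "jl h dzero = dzero"
  using jl_sc2[of h 0 dzero] by (simp add: dscale_0)

lemma jr_jl: "jr a b = jl b a"
  by (simp add: jr_def jl_def dadd_def add.commute)



datatype jt = JX | JY | JJ jt jt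

fun tdeg :: "jt \<Rightarrow> nat" where
  "tdeg JX = 1" | "tdeg JY = 1" | "tdeg (JJ a b) = tdeg a + tdeg b"

fun tval :: "jt \<Rightarrow> 'k::field dias" where
  "tval JX = dgen False" | "tval JY = dgen True" | "tval (JJ a b) = jl (tval a) (tval b)"

lemma tdeg_pos: "1 \<le> tdeg t" by (induction t) auto

lemma agree_refl[simp]: "agree f f n" by (simp add: agree_def)
lemma agree_0[simp]: "agree f g 0" by (simp add: agree_def)

lemma splitcond_zero: "(\<forall>m1 m2. 1\<le>m1 \<longrightarrow> 1\<le>m2 \<longrightarrow> m1+m2=n \<longrightarrow> zeroat f m1 \<or> zeroat g m2) \<Longrightarrow> splitcond f g dzero dzero n"
  by (auto simp: splitcond_def)

lemma homog: "n \<noteq> tdeg t \<Longrightarrow> zeroat (tval t :: 'k::field dias) n"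
proof (induction t arbitrary: n)
  case JX then show ?case by (auto simp: agree_def dgen_def dzero_def)
next
  case JY then show ?case by (auto simp: agree_def dgen_def dzero_def)
next
  case (JJ a b)
  show ?case unfolding agree_def
  proof (intro allI impI)
    fix u :: "bool list" and i assume u: "length u = n" "i < n"
    have "splitcond (tval a :: 'k dias) (tval b) dzero dzero n"
    proof (rule splitcond_zero, intro allI impI)
      fix m1 m2 assume "1 \<le> m1" "1 \<le> m2" "m1 + m2 = n"
      then have "m1 \<noteq> tdeg a \<or> m2 \<noteq> tdeg b" using JJ.prems by auto
      then show "zeroat (tval a :: 'k dias) m1 \<or> zeroat (tval b :: 'k dias) m2" using JJ.IH by blast
    qed
    from loc_jl[OF u this] show "tval (JJ a b) (u, i) = (dzero::'k dias) (u, i)"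
      by (simp add: jl_zero1)
  qed
qed

fun lin :: "('k::field \<times> jt) list \<Rightarrow> 'k dias" where
  "lin [] = dzero" | "lin ((c,t)#L) = dadd (dscale c (tval t)) (lin L)"

lemma lin_append: "lin (L1 @ L2) = dadd (lin L1) (lin L2)"
  by (induction L1 rule: lin.induct) (auto simp: dadd_def dzero_def fun_eq_iff)

lemma lin_scale: "lin (map (\<lambda>(c,t). (d*c,t)) L) = dscale d (lin L)"
  by (induction L rule: lin.induct) (auto simp: dadd_def dzero_def dscale_def fun_eq_iff algebra_simps)

definition prodL :: "('k::field \<times> jt) list \<Rightarrow> ('k \<times> jt) list \<Rightarrow> ('k \<times> jt) list" where
  "prodL L1 L2 = concat (map (\<lambda>(c,t). map (\<lambda>(d,u). (c*d, JJ t u)) L2) L1)"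

lemma jl_lin2: "jl (tval t) (lin L2) = lin (map (\<lambda>(d,u). (d, JJ t u)) L2)"
  by (induction L2 rule: lin.induct) (auto simp: jl_zero2 jl_add2 jl_sc2)

lemma jl_lin: "jl (lin L1) (lin L2) = lin (prodL L1 L2)"
proof (induction L1 rule: lin.induct)
  case 1 then show ?case by (simp add: prodL_def jl_zero1)
next
  case (2 c t L)
  have "lin (map (\<lambda>(d,u). (c*d, JJ t u)) L2) = dscale c (lin (map (\<lambda>(d,u). (d, JJ t u)) L2))"
    by (induction L2) (auto simp: dadd_def dscale_def dzero_def fun_eq_iff algebra_simps)
  then show ?case using 2 by (simp add: prodL_def lin_append jl_add1 jl_sc1 jl_lin2)
qed

definition Qinv :: "'k::field dias \<Rightarrow> bool" where
  "Qinv a \<longleftrightarrow> (\<exists>L. \<forall>n\<le>3. agree a (lin L) n)"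

lemma agree_add: "agree a a' n \<Longrightarrow> agree b b' n \<Longrightarrow> agree (dadd a b) (dadd a' b') n"
  by (simp add: agree_def dadd_def)
lemma agree_sc: "agree a a' n \<Longrightarrow> agree (dscale c a) (dscale c a') n"
  by (simp add: agree_def dscale_def)

lemma Qinv_jl: assumes "Qinv a" "Qinv b" shows "Qinv (jl a b)"
proof -
  obtain La Lb where a: "\<forall>n\<le>3. agree a (lin La) n" and b: "\<forall>n\<le>3. agree b (lin Lb) n"
    using assms by (auto simp: Qinv_def)
  have "\<forall>n\<le>3. agree (jl a b) (lin (prodL La Lb)) n"
  proof (intro allI impI)
    fix n :: nat assume n: "n \<le> 3"
    show "agree (jl a b) (lin (prodL La Lb)) n" unfolding agree_def jl_lin[symmetric]
    proof (intro allI impI)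
      fix u :: "bool list" and i assume u: "length u = n" "i < n"
      have "splitcond a b (lin La) (lin Lb) n"
        unfolding splitcond_def using a b n by auto
      from loc_jl[OF u this] show "jl a b (u, i) = jl (lin La) (lin Lb) (u, i)" .
    qed
  qed
  then show ?thesis by (auto simp: Qinv_def)
qed

lemma DiSJ_Qinv: "a \<in> DiSJ \<Longrightarrow> Qinv a"
proof (induction rule: DiSJ.induct)
  case gen_x
  have "lin [(1::'a, JX)] = dgen False" by (simp add: dadd_def dscale_def dzero_def fun_eq_iff)
  then show ?case unfolding Qinv_def by (metis agree_refl)
next
  case gen_y
  have "lin [(1::'a, JY)] = dgen True" by (simp add: dadd_def dscale_def dzero_def fun_eq_iff)
  then show ?case unfolding Qinv_def by (metis agree_refl)
next
  case zero
  show ?case unfolding Qinv_def by (rule exI[of _ "[]"]) simp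
next
  case (add a b)
  then obtain La Lb where "\<forall>n\<le>3. agree a (lin La) n" "\<forall>n\<le>3. agree b (lin Lb) n" by (auto simp: Qinv_def)
  then show ?case unfolding Qinv_def by (intro exI[of _ "La @ Lb"]) (simp add: lin_append agree_add)
next
  case (scale a c)
  then obtain La where "\<forall>n\<le>3. agree a (lin La) n" by (auto simp: Qinv_def)
  then show ?case unfolding Qinv_def by (intro exI[of _ "map (\<lambda>(d,t). (c*d,t)) La"]) (simp add: lin_scale agree_sc)
next
  case (opl a b) then show ?case by (simp add: Qinv_jl)
next
  case (opr a b) then show ?case by (simp add: Qinv_jl jr_jl)
qed



type_synonym mono = "bool list \<times> nat"
type_synonym ilist = "(mono \<times> int) list"

definition Lam :: ilist where "Lam = [(([False, False, False, True, True], 3), (-2)), (([False, False, False, True, True], 4), 2), (([False, False, True, False, True], 4), 1), (([False, True, False, False, True], 4), (-1)), (([False, True, True, False, False], 1), 1), (([False, True, True, False, False], 2), (-1)), (([False, True, True, True, True], 3), (-2)), (([False, True, True, True, True], 4), 2), (([True, False, False, True, False], 0), 4), (([True, False, False, True, False], 2), (-2)), (([True, False, False, True, False], 3), (-1)), (([True, False, True, False, False], 0), (-3)), (([True, False, True, False, False], 2), 1), (([True, False, True, False, False], 3), 2), (([True, False, True, False, False], 4), (-1)), (([True, False, True, True, True], 0), (-1)), (([True, False, True, True, True], 4), 1), (([True, True, False, False, False], 0), (-1)), (([True, True, False, False, False], 1), 1)]"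

lemma Lam_valid: "\<forall>x\<in>set Lam. length (fst (fst x)) = 5 \<and> snd (fst x) < 5"
  by (simp add: Lam_def)

definition lamL :: "ilist \<Rightarrow> 'k::field dias \<Rightarrow> 'k" where
  "lamL L f = sum_list (map (\<lambda>(m,c). of_int c * f m) L)"

lemma lamL_add: "lamL L (dadd f g) = lamL L f + lamL L g"
  by (induction L) (auto simp: lamL_def dadd_def algebra_simps)
lemma lamL_sc: "lamL L (dscale c f) = c * lamL L f"
  by (induction L) (auto simp: lamL_def dscale_def algebra_simps)
lemma lamL_cong: "(\<forall>x\<in>set L. f (fst x) = g (fst x)) \<Longrightarrow> lamL L f = lamL L g"
  by (induction L) (auto simp: lamL_def)

fun app :: "bool \<times> jt \<Rightarrow> 'k::field dias \<Rightarrow> 'k dias" where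
  "app (s,t) f = (if s then jl (tval t) f else jl f (tval t))"

fun Phi :: "(bool \<times> jt) list \<Rightarrow> 'k::field dias \<Rightarrow> 'k" where
  "Phi [] f = lamL Lam f" | "Phi (q#p) f = Phi p (app q f)"

definition pdeg :: "(bool \<times> jt) list \<Rightarrow> nat" where
  "pdeg p = sum_list (map (\<lambda>q. tdeg (snd q)) p)"

lemma pdeg_simps[simp]: "pdeg [] = 0" "pdeg (q#p) = tdeg (snd q) + pdeg p"
  by (simp_all add: pdeg_def)

lemma app_add: "app q (dadd f g) = dadd (app q f) (app q g)"
  by (cases q) (simp add: jl_add1 jl_add2)
lemma app_sc: "app q (dscale c f) = dscale c (app q f)"
  by (cases q) (simp add: jl_sc1 jl_sc2)

lemma Phi_add: "Phi p (dadd f g) = Phi p f + Phi p g"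
  by (induction p arbitrary: f g) (simp_all add: lamL_add app_add)
lemma Phi_sc: "Phi p (dscale c f) = c * Phi p f"
  by (induction p arbitrary: f) (simp_all add: lamL_sc app_sc)
lemma Phi_zero: "Phi p dzero = 0"
  using Phi_sc[of p 0 dzero] by (simp add: dscale_0)

lemma Phi_read: "(\<forall>j. j + pdeg p = 5 \<longrightarrow> agree f f' j) \<Longrightarrow> Phi p f = Phi p (f'::'k::field dias)"
proof (induction p arbitrary: f f')
  case Nil
  have "agree f f' 5" using Nil by simp
  then show ?case using Lam_valid by (auto simp: agree_def intro!: lamL_cong)
next
  case (Cons q p)
  obtain s t where q: "q = (s,t)" by (cases q)
  have "\<forall>j. j + pdeg p = 5 \<longrightarrow> agree (app q f) (app q f') j"
  proof (intro allI impI)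
    fix j assume j: "j + pdeg p = 5"
    show "agree (app q f) (app q f') j" unfolding agree_def
    proof (intro allI impI)
      fix u :: "bool list" and i assume u: "length u = j" "i < j"
      show "app q f (u, i) = app q f' (u, i)"
      proof (cases s)
        case True
        have "splitcond (tval t) f (tval t) f' j" unfolding splitcond_def
        proof (intro allI impI)
          fix m1 m2 assume "1 \<le> m1" "1 \<le> m2" "m1 + m2 = j"
          then show "(agree (tval t :: 'k dias) (tval t) m1 \<and> agree f f' m2) \<or> (zeroat (tval t :: 'k dias) m1 \<and> zeroat (tval t :: 'k dias) m1) \<or> (zeroat f m2 \<and> zeroat f' m2)"
            using Cons.prems j q homog[of m1 t] by (cases "m1 = tdeg t") auto
        qed
        from loc_jl[OF u this] show ?thesis using q True by simp
      next
        case False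
        have "splitcond f (tval t) f' (tval t) j" unfolding splitcond_def
        proof (intro allI impI)
          fix m1 m2 assume "1 \<le> m1" "1 \<le> m2" "m1 + m2 = j"
          then show "(agree f f' m1 \<and> agree (tval t :: 'k dias) (tval t) m2) \<or> (zeroat f m1 \<and> zeroat f' m1) \<or> (zeroat (tval t :: 'k dias) m2 \<and> zeroat (tval t :: 'k dias) m2)"
            using Cons.prems j q homog[of m2 t] by (cases "m2 = tdeg t") auto
        qed
        from loc_jl[OF u this] show ?thesis using q False by simp
      qed
    qed
  qed
  then show ?case using Cons.IH by simp
qed

lemma Phi_R0: "4 \<le> pdeg p \<Longrightarrow> zeroat f 1 \<Longrightarrow> Phi p f = 0"
proof -
  assume a: "4 \<le> pdeg p" "zeroat f 1"
  have "Phi p f = Phi p dzero"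
  proof (rule Phi_read, intro allI impI)
    fix j assume "j + pdeg p = 5"
    then have "j = 0 \<or> j = 1" using a by auto
    then show "agree f dzero j" using a by auto
  qed
  then show ?thesis by (simp add: Phi_zero)
qed

lemma Phi_lin1: "Phi p (jl (lin L) i) = sum_list (map (\<lambda>(c,t). c * Phi ((True,t)#p) i) L)"
  by (induction L rule: lin.induct) (simp_all add: jl_zero1 Phi_zero jl_add1 jl_sc1 Phi_add Phi_sc)
lemma Phi_lin2: "Phi p (jl i (lin L)) = sum_list (map (\<lambda>(c,t). c * Phi ((False,t)#p) i) L)"
  by (induction L rule: lin.induct) (simp_all add: jl_zero2 Phi_zero jl_add2 jl_sc2 Phi_add Phi_sc)

lemma suml0: "(\<forall>x\<in>set L. f x = 0) \<Longrightarrow> sum_list (map f L) = 0"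
  by (induction L) auto

definition Pinv :: "'k::field dias \<Rightarrow> bool" where
  "Pinv i \<longleftrightarrow> zeroat i 1 \<and> (\<forall>p. pdeg p \<le> 3 \<longrightarrow> Phi p i = 0)"

lemma jl_deg1: "zeroat (jl a b) 1"
proof -
  have "splitcond a b dzero dzero 1" by (auto simp: splitcond_def)
  then show ?thesis unfolding agree_def using loc_jl[of _ 1 _ a b dzero dzero] by (simp add: jl_zero1)
qed

lemma Pinv_ml: assumes a: "a \<in> DiSJ" and i: "Pinv i" shows "Pinv (jl a i)"
proof -
  obtain L where L: "\<forall>n\<le>3. agree a (lin L) n" using DiSJ_Qinv[OF a] by (auto simp: Qinv_def)
  have z1: "zeroat i 1" and ph: "\<forall>p. pdeg p \<le> 3 \<longrightarrow> Phi p i = 0" using i by (auto simp: Pinv_def)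
  have "Phi p (jl a i) = 0" if p: "pdeg p \<le> 3" for p
  proof -
    have "Phi p (jl a i) = Phi p (jl (lin L) i)"
    proof (rule Phi_read, intro allI impI)
      fix j assume j: "j + pdeg p = 5"
      show "agree (jl a i) (jl (lin L) i) j" unfolding agree_def
      proof (intro allI impI)
        fix u :: "bool list" and k assume u: "length u = j" "k < j"
        have "splitcond a i (lin L) i j" unfolding splitcond_def
        proof (intro allI impI)
          fix m1 m2 assume "1 \<le> m1" "1 \<le> m2" "m1 + m2 = j"
          then show "(agree a (lin L) m1 \<and> agree i i m2) \<or> (zeroat a m1 \<and> zeroat (lin L) m1) \<or> (zeroat i m2 \<and> zeroat i m2)"
            using L z1 j by (cases "m2 = 1") auto
        qed
        from loc_jl[OF u this] show "jl a i (u, k) = jl (lin L) i (u, k)" .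
      qed
    qed
    also have "\<dots> = 0" unfolding Phi_lin1
    proof (rule suml0, clarify)
      fix c t assume "(c,t) \<in> set L"
      show "c * Phi ((True, t) # p) i = 0"
      proof (cases "tdeg t + pdeg p \<le> 3")
        case True then show ?thesis using ph[rule_format, of "(True,t)#p"] by simp
      next
        case False then show ?thesis using Phi_R0[OF _ z1, of "(True,t)#p"] by simp
      qed
    qed
    finally show ?thesis .
  qed
  then show ?thesis unfolding Pinv_def using jl_deg1[of a i] by blast
qed

lemma Pinv_mr: assumes a: "a \<in> DiSJ" and i: "Pinv i" shows "Pinv (jl i a)"
proof -
  obtain L where L: "\<forall>n\<le>3. agree a (lin L) n" using DiSJ_Qinv[OF a] by (auto simp: Qinv_def)
  have z1: "zeroat i 1" and ph: "\<forall>p. pdeg p \<le> 3 \<longrightarrow> Phi p i = 0" using i by (auto simp: Pinv_def)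
  have "Phi p (jl i a) = 0" if p: "pdeg p \<le> 3" for p
  proof -
    have "Phi p (jl i a) = Phi p (jl i (lin L))"
    proof (rule Phi_read, intro allI impI)
      fix j assume j: "j + pdeg p = 5"
      show "agree (jl i a) (jl i (lin L)) j" unfolding agree_def
      proof (intro allI impI)
        fix u :: "bool list" and k assume u: "length u = j" "k < j"
        have "splitcond i a i (lin L) j" unfolding splitcond_def
        proof (intro allI impI)
          fix m1 m2 assume "1 \<le> m1" "1 \<le> m2" "m1 + m2 = j"
          then show "(agree i i m1 \<and> agree a (lin L) m2) \<or> (zeroat i m1 \<and> zeroat i m1) \<or> (zeroat a m2 \<and> zeroat (lin L) m2)"
            using L z1 j by (cases "m1 = 1") auto
        qed
        from loc_jl[OF u this] show "jl i a (u, k) = jl i (lin L) (u, k)" .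
      qed
    qed
    also have "\<dots> = 0" unfolding Phi_lin2
    proof (rule suml0, clarify)
      fix c t assume "(c,t) \<in> set L"
      show "c * Phi ((False, t) # p) i = 0"
      proof (cases "tdeg t + pdeg p \<le> 3")
        case True then show ?thesis using ph[rule_format, of "(False,t)#p"] by simp
      next
        case False then show ?thesis using Phi_R0[OF _ z1, of "(False,t)#p"] by simp
      qed
    qed
    finally show ?thesis .
  qed
  then show ?thesis unfolding Pinv_def using jl_deg1[of i a] by blast
qed

lemma kelem_eq: "kelem = dadd (tval (JJ JX JX)) (dscale (-1) (tval (JJ JY JY)))"
  by (simp add: kelem_def jl_def dsub_def dadd_def dscale_def fun_eq_iff algebra_simps)

lemma I_Pinv:
  assumes num: "\<forall>p. pdeg p = 3 \<longrightarrow> Phi p (kelem::'k::field dias) = 0"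
  shows "i \<in> Iideal \<Longrightarrow> Pinv (i::'k dias)"
proof (induction rule: Iideal.induct)
  case gen
  have h: "zeroat (kelem::'k dias) j" if j2: "j \<noteq> 2" for j
  proof -
    have "zeroat (tval (JJ JX JX) :: 'k dias) j" "zeroat (tval (JJ JY JY) :: 'k dias) j"
      using j2 homog[of j "JJ JX JX"] homog[of j "JJ JY JY"] by auto
    then show ?thesis unfolding kelem_eq agree_def by (simp add: dadd_def dscale_def dzero_def)
  qed
  have "Phi p (kelem::'k dias) = 0" if "pdeg p \<le> 3" for p
  proof (cases "pdeg p = 3")
    case True then show ?thesis using num by simp
  next
    case False
    have "Phi p (kelem::'k dias) = Phi p dzero"
      by (rule Phi_read) (use False that h in auto)
    then show ?thesis by (simp add: Phi_zero)
  qed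
  then show ?case unfolding Pinv_def using h by auto
next
  case zero
  then show ?case by (simp add: Pinv_def Phi_zero)
next
  case (add a b)
  have "zeroat (dadd a b) 1" using add by (auto simp: Pinv_def agree_def dadd_def dzero_def)
  moreover have "\<forall>p. pdeg p \<le> 3 \<longrightarrow> Phi p (dadd a b) = 0" using add by (simp add: Pinv_def Phi_add)
  ultimately show ?case unfolding Pinv_def by blast
next
  case (scale a c)
  have "zeroat (dscale c a) 1" using scale by (auto simp: Pinv_def agree_def dscale_def dzero_def)
  moreover have "\<forall>p. pdeg p \<le> 3 \<longrightarrow> Phi p (dscale c a) = 0" using scale by (simp add: Pinv_def Phi_sc)
  ultimately show ?case unfolding Pinv_def by blast
next
  case (ml a i) then show ?case by (simp add: Pinv_ml)
next
  case (mr a i) then show ?case by (simp add: Pinv_mr)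
next
  case (nl a i) then show ?case by (simp add: jr_jl Pinv_mr)
next
  case (nr a i) then show ?case by (simp add: jr_jl Pinv_ml)
qed



definition cnt :: "ilist \<Rightarrow> mono \<Rightarrow> int" where
  "cnt L m = sum_list (map snd (filter (\<lambda>p. fst p = m) L))"
definition tf :: "ilist \<Rightarrow> 'k::field dias" where
  "tf L = (\<lambda>m. of_int (cnt L m))"
definition validL :: "ilist \<Rightarrow> bool" where
  "validL L \<longleftrightarrow> (\<forall>x\<in>set L. snd (fst x) < length (fst (fst x)))"

definition vdl :: "ilist \<Rightarrow> ilist \<Rightarrow> ilist" where
 "vdl A B = concat (map (\<lambda>((u,i),c). map (\<lambda>((v,j),d). ((u@v, length u + j), c*d)) B) A)"
definition dvl :: "ilist \<Rightarrow> ilist \<Rightarrow> ilist" where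
 "dvl A B = concat (map (\<lambda>((u,i),c). map (\<lambda>((v,j),d). ((u@v, i), c*d)) B) A)"
definition J2l :: "ilist \<Rightarrow> ilist \<Rightarrow> ilist" where "J2l A B = vdl A B @ dvl B A"
definition negl :: "ilist \<Rightarrow> ilist" where "negl L = map (\<lambda>(m,c). (m, -c)) L"

lemma cnt_simps[simp]: "cnt [] m = 0" "cnt (x#L) m = (if fst x = m then snd x else 0) + cnt L m"
  "cnt (A@B) m = cnt A m + cnt B m"
  by (simp_all add: cnt_def)
lemma cnt_negl[simp]: "cnt (negl L) m = - cnt L m"
  by (induction L) (auto simp: negl_def)

lemma tf_Nil: "tf [] = dzero" by (simp add: tf_def dzero_def)
lemma tf_append: "tf (A@B) = dadd (tf A) (tf B)" by (simp add: tf_def dadd_def fun_eq_iff)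
lemma tf_Cons: "tf (x#L) = dadd (tf [x]) (tf L)" using tf_append[of "[x]" L] by simp
lemma tf_negl: "tf (negl L) = dscale (-1) (tf L)" by (simp add: tf_def dscale_def fun_eq_iff)
lemma tf_single: "tf [((u,i),c)] = (\<lambda>m. if m = (u,i) then of_int c else 0)"
  by (auto simp: tf_def fun_eq_iff)

lemma validL_simps[simp]: "validL []" "validL (x#L) \<longleftrightarrow> snd (fst x) < length (fst (fst x)) \<and> validL L"
  "validL (A@B) \<longleftrightarrow> validL A \<and> validL B"
  by (auto simp: validL_def)

lemma vdl_Cons1: "vdl (x#A) B = vdl [x] B @ vdl A B" by (simp add: vdl_def)
lemma vdl_Cons2: "vdl [x] (y#B) = vdl [x] [y] @ vdl [x] B" by (simp add: vdl_def split: prod.splits)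
lemma vdl_Nil1[simp]: "vdl [] B = []" by (simp add: vdl_def)
lemma vdl_Nil2[simp]: "vdl A [] = []" by (induction A) (auto simp: vdl_def)
lemma vdl_ss: "vdl [((u,i),c)] [((v,j),d)] = [((u@v, length u + j), c*d)]" by (simp add: vdl_def)
lemma dvl_Cons1: "dvl (x#A) B = dvl [x] B @ dvl A B" by (simp add: dvl_def)
lemma dvl_Cons2: "dvl [x] (y#B) = dvl [x] [y] @ dvl [x] B" by (simp add: dvl_def split: prod.splits)
lemma dvl_Nil1[simp]: "dvl [] B = []" by (simp add: dvl_def)
lemma dvl_Nil2[simp]: "dvl A [] = []" by (induction A) (auto simp: dvl_def)
lemma dvl_ss: "dvl [((u,i),c)] [((v,j),d)] = [((u@v, i), c*d)]" by (simp add: dvl_def)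

lemma validL_vdl: "validL A \<Longrightarrow> validL B \<Longrightarrow> validL (vdl A B)"
  by (auto simp: validL_def vdl_def split: prod.splits)
lemma validL_dvl: "validL A \<Longrightarrow> validL B \<Longrightarrow> validL (dvl A B)"
  by (auto simp: validL_def dvl_def split: prod.splits)
lemma validL_J2l: "validL A \<Longrightarrow> validL B \<Longrightarrow> validL (J2l A B)"
  by (simp add: J2l_def validL_vdl validL_dvl)
lemma validL_negl: "validL A \<Longrightarrow> validL (negl A)"
  by (auto simp: validL_def negl_def split: prod.splits)

lemma inner_delta: "(\<Sum>i'<(m::nat). if (U, i') = (u,i) then (c::'k::field) else 0) = (if U = u \<and> i < m then c else 0)"
  by (cases "U = u") (simp_all add: sum.delta)

lemma dvdash_ss:
  assumes "i < length u" "j < length v"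
  shows "dvdash (tf [((u,i),c)]) (tf [((v,j),d)]) = (tf [((u@v, length u + j), c*d)] :: 'k::field dias)"
proof (rule ext, clarify)
  fix w k
  let ?S = "\<lambda>m. (if m = length u then (if w = u @ v \<and> k = length u + j then (of_int (c*d)::'k) else 0) else 0)"
  have "dvdash (tf [((u,i),c)]) (tf [((v,j),d)]) (w,k) = (\<Sum>m\<in>{1..<length w}. ?S m)"
    unfolding dvdash_def tf_single
  proof (simp only: split_conv inner_delta, rule sum.cong[OF refl])
    fix m assume m: "m \<in> {1..<length w}"
    show "(if m \<le> k then (if take m w = u \<and> i < m then of_int c else 0) *
          (if (drop m w, k - m) = (v, j) then of_int d else 0) else 0) = ?S m"
    proof (cases "m \<le> k \<and> take m w = u \<and> drop m w = v \<and> k - m = j")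
      case True
      then have "length u = m" "w = u @ v" using m by auto
      then show ?thesis using True assms by auto
    next
      case False
      have "\<not> (m = length u \<and> w = u @ v \<and> k = length u + j)"
      proof
        assume h: "m = length u \<and> w = u @ v \<and> k = length u + j"
        then show False using False by auto
      qed
      then have s0: "?S m = 0" by auto
      have "(if m \<le> k then (if take m w = u \<and> i < m then of_int c else 0) *
          (if (drop m w, k - m) = (v, j) then of_int d else 0) else (0::'k)) = 0"
        using False by (cases "m \<le> k"; cases "take m w = u"; cases "drop m w = v"; cases "k - m = j") simp_all
      then show ?thesis using s0 by simp
    qed
  qed
  also have "\<dots> = (if w = u @ v \<and> k = length u + j then of_int (c*d) else 0)"
    using assms by (auto simp: sum.delta')
  also have "\<dots> = tf [((u@v, length u + j), c*d)] (w,k)" by (auto simp: tf_single)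
  finally show "dvdash (tf [((u,i),c)]) (tf [((v,j),d)]) (w,k) = (tf [((u@v, length u + j), c*d)] :: 'k dias) (w,k)" .
qed


lemma ddashv_ss:
  assumes "i < length u" "j < length v"
  shows "ddashv (tf [((u,i),c)]) (tf [((v,j),d)]) = (tf [((u@v, i), c*d)] :: 'k::field dias)"
proof (rule ext, clarify)
  fix w k
  let ?S = "\<lambda>m. (if m = length u then (if w = u @ v \<and> k = i then (of_int (c*d)::'k) else 0) else 0)"
  have "ddashv (tf [((u,i),c)]) (tf [((v,j),d)]) (w,k) = (\<Sum>m\<in>{1..<length w}. ?S m)"
    unfolding ddashv_def tf_single
  proof (simp only: split_conv inner_delta, rule sum.cong[OF refl])
    fix m assume m: "m \<in> {1..<length w}"
    show "(if k < m then (if (take m w, k) = (u, i) then of_int c else 0) *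
          (if drop m w = v \<and> j < length w - m then of_int d else 0) else 0) = ?S m"
    proof (cases "k < m \<and> take m w = u \<and> drop m w = v \<and> k = i")
      case True
      then have "length u = m" "w = u @ v" using m by auto
      then show ?thesis using True assms by auto
    next
      case False
      have "\<not> (m = length u \<and> w = u @ v \<and> k = i)"
      proof
        assume h: "m = length u \<and> w = u @ v \<and> k = i"
        then show False using False assms by auto
      qed
      then have s0: "?S m = 0" by auto
      have "(if k < m then (if (take m w, k) = (u, i) then of_int c else 0) *
          (if drop m w = v \<and> j < length w - m then of_int d else 0) else (0::'k)) = 0"
        using False by (cases "k < m"; cases "take m w = u"; cases "drop m w = v"; cases "k = i") simp_all
      then show ?thesis using s0 by simp
    qed
  qed
  also have "\<dots> = (if w = u @ v \<and> k = i then of_int (c*d) else 0)"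
    using assms by (auto simp: sum.delta')
  also have "\<dots> = tf [((u@v, i), c*d)] (w,k)" by (auto simp: tf_single)
  finally show "ddashv (tf [((u,i),c)]) (tf [((v,j),d)]) (w,k) = (tf [((u@v, i), c*d)] :: 'k dias) (w,k)" .
qed

lemma dvdash_zero1: "dvdash dzero h = dzero" using dvdash_sc1[of 0 dzero h] by (simp add: dscale_0)
lemma dvdash_zero2: "dvdash h dzero = dzero" using dvdash_sc2[of h 0 dzero] by (simp add: dscale_0)
lemma ddashv_zero1: "ddashv dzero h = dzero" using ddashv_sc1[of 0 dzero h] by (simp add: dscale_0)
lemma ddashv_zero2: "ddashv h dzero = dzero" using ddashv_sc2[of h 0 dzero] by (simp add: dscale_0)

lemma tf_vdl1: "validL [x] \<Longrightarrow> validL B \<Longrightarrow> dvdash (tf [x]) (tf B) = (tf (vdl [x] B) :: 'k::field dias)"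
proof (induction B)
  case Nil then show ?case by (simp add: tf_Nil dvdash_zero2)
next
  case (Cons y B)
  obtain u i c where x: "x = ((u,i),c)" by (metis prod.collapse)
  obtain v j d where y: "y = ((v,j),d)" by (metis prod.collapse)
  have "dvdash (tf [x] :: 'k dias) (tf (y#B)) = dadd (dvdash (tf [x]) (tf [y])) (dvdash (tf [x]) (tf B))"
    by (subst tf_Cons) (simp add: dvdash_add2)
  also have "\<dots> = dadd (tf (vdl [x] [y])) (tf (vdl [x] B) :: 'k dias)"
    using Cons x y by (simp add: dvdash_ss vdl_ss)
  finally show ?case by (simp add: vdl_Cons2[of x y B] tf_append)
qed

lemma tf_vdl: "validL A \<Longrightarrow> validL B \<Longrightarrow> dvdash (tf A) (tf B) = (tf (vdl A B) :: 'k::field dias)"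
proof (induction A)
  case Nil then show ?case by (simp add: tf_Nil dvdash_zero1)
next
  case (Cons x A)
  have "dvdash (tf (x#A) :: 'k dias) (tf B) = dadd (dvdash (tf [x]) (tf B)) (dvdash (tf A) (tf B))"
    by (subst tf_Cons) (simp add: dvdash_add1)
  moreover have "dvdash (tf [x] :: 'k dias) (tf B) = tf (vdl [x] B)" using Cons.prems by (intro tf_vdl1) auto
  ultimately show ?case using Cons by (simp add: vdl_Cons1[of x A B] tf_append)
qed

lemma tf_dvl1: "validL [x] \<Longrightarrow> validL B \<Longrightarrow> ddashv (tf [x]) (tf B) = (tf (dvl [x] B) :: 'k::field dias)"
proof (induction B)
  case Nil then show ?case by (simp add: tf_Nil ddashv_zero2)
next
  case (Cons y B)
  obtain u i c where x: "x = ((u,i),c)" by (metis prod.collapse)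
  obtain v j d where y: "y = ((v,j),d)" by (metis prod.collapse)
  have "ddashv (tf [x] :: 'k dias) (tf (y#B)) = dadd (ddashv (tf [x]) (tf [y])) (ddashv (tf [x]) (tf B))"
    by (subst tf_Cons) (simp add: ddashv_add2)
  also have "\<dots> = dadd (tf (dvl [x] [y])) (tf (dvl [x] B) :: 'k dias)"
    using Cons x y by (simp add: ddashv_ss dvl_ss)
  finally show ?case by (simp add: dvl_Cons2[of x y B] tf_append)
qed

lemma tf_dvl: "validL A \<Longrightarrow> validL B \<Longrightarrow> ddashv (tf A) (tf B) = (tf (dvl A B) :: 'k::field dias)"
proof (induction A)
  case Nil then show ?case by (simp add: tf_Nil ddashv_zero1)
next
  case (Cons x A)
  have "ddashv (tf (x#A) :: 'k dias) (tf B) = dadd (ddashv (tf [x]) (tf B)) (ddashv (tf A) (tf B))"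
    by (subst tf_Cons) (simp add: ddashv_add1)
  moreover have "ddashv (tf [x] :: 'k dias) (tf B) = tf (dvl [x] B)" using Cons.prems by (intro tf_dvl1) auto
  ultimately show ?case using Cons by (simp add: dvl_Cons1[of x A B] tf_append)
qed

lemma tf_J2l: "(2::'k::field) \<noteq> 0 \<Longrightarrow> validL A \<Longrightarrow> validL B \<Longrightarrow> tf (J2l A B) = dscale 2 (jl (tf A) (tf B) :: 'k dias)"
  by (simp add: J2l_def tf_append tf_vdl tf_dvl jl_def dscale_def dadd_def fun_eq_iff)



fun tll :: "jt \<Rightarrow> ilist" where
  "tll JX = [(([False],0),1)]" | "tll JY = [(([True],0),1)]" | "tll (JJ a b) = J2l (tll a) (tll b)"

definition Klist :: ilist where "Klist = tll (JJ JX JX) @ negl (tll (JJ JY JY))"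

lemma validL_tll: "validL (tll t)"
  by (induction t) (simp_all add: validL_J2l)

lemma validL_Klist: "validL Klist"
  using validL_tll[of "JJ JX JX"] validL_tll[of "JJ JY JY"] by (simp add: Klist_def validL_negl del: tll.simps)

lemma dscale_dscale: "dscale a (dscale b f) = dscale (a*b) f"
  by (simp add: dscale_def fun_eq_iff)

lemma tf_tll: "(2::'k::field) \<noteq> 0 \<Longrightarrow> tf (tll t) = dscale (2^(tdeg t - 1)) (tval t :: 'k dias)"
proof (induction t)
  case JX then show ?case by (auto simp: tf_single dscale_def dgen_def fun_eq_iff)
next
  case JY then show ?case by (auto simp: tf_single dscale_def dgen_def fun_eq_iff)
next
  case (JJ a b)
  have da: "1 \<le> tdeg a" and db: "1 \<le> tdeg b" using tdeg_pos[of a] tdeg_pos[of b] by auto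
  have "tf (tll (JJ a b)) = dscale 2 (jl (tf (tll a)) (tf (tll b)) :: 'k dias)"
    using JJ.prems by (simp add: tf_J2l validL_tll)
  also have "\<dots> = dscale (2 * 2^(tdeg a - 1) * 2^(tdeg b - 1)) (tval (JJ a b))"
    using JJ by (simp add: jl_sc1 jl_sc2 dscale_dscale mult_ac)
  also have "(2::'k) * 2^(tdeg a - 1) * 2^(tdeg b - 1) = 2^(tdeg (JJ a b) - 1)"
    using da db by (simp add: power_add[symmetric] power_Suc[symmetric] del: power_Suc)
  finally show ?case .
qed

lemma tf_Klist: "(2::'k::field) \<noteq> 0 \<Longrightarrow> tf Klist = dscale 2 (kelem :: 'k dias)"
  using tf_tll[of "JJ JX JX"] tf_tll[of "JJ JY JY"] by (simp del: tll.simps add: Klist_def tf_append tf_negl tf_tll kelem_eq dadd_def dscale_def fun_eq_iff algebra_simps)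

definition LI :: "ilist \<Rightarrow> int" where "LI L = sum_list (map (\<lambda>(m,c). c * cnt L m) Lam)"

lemma lamL_tf_gen: "lamL M (tf L) = (of_int (sum_list (map (\<lambda>(m,c). c * cnt L m) M)) :: 'k::field)"
  by (induction M) (auto simp: lamL_def tf_def)

lemma lamL_tf: "lamL Lam (tf L) = (of_int (LI L) :: 'k::field)"
  by (simp add: LI_def lamL_tf_gen)

fun appI :: "bool \<times> jt \<Rightarrow> ilist \<Rightarrow> ilist" where
  "appI (s,t) L = (if s then J2l (tll t) L else J2l L (tll t))"
fun PhiI :: "(bool \<times> jt) list \<Rightarrow> ilist \<Rightarrow> int" where
  "PhiI [] L = LI L" | "PhiI (q#p) L = PhiI p (appI q L)"

lemma validL_appI: "validL L \<Longrightarrow> validL (appI q L)"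
  by (cases q) (simp add: validL_J2l validL_tll)

lemma tf_appI: "(2::'k::field) \<noteq> 0 \<Longrightarrow> validL L \<Longrightarrow> tf (appI q L) = dscale (2^tdeg (snd q)) (app q (tf L) :: 'k dias)"
proof -
  assume 2: "(2::'k) \<noteq> 0" and v: "validL L"
  obtain s t where q: "q = (s,t)" by (cases q)
  have d: "(2::'k) * 2^(tdeg t - 1) = 2^tdeg t" using tdeg_pos[of t]
    by (simp add: power_Suc[symmetric] del: power_Suc)
  show ?thesis using 2 v q d
    by (cases s) (simp_all add: tf_J2l validL_tll tf_tll jl_sc1 jl_sc2 dscale_dscale)
qed

lemma Phi_tf: "(2::'k::field) \<noteq> 0 \<Longrightarrow> validL L \<Longrightarrow> (of_int (PhiI p L) :: 'k) = 2^(pdeg p) * Phi p (tf L)"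
proof (induction p arbitrary: L)
  case Nil then show ?case by (simp add: lamL_tf)
next
  case (Cons q p)
  have "(of_int (PhiI (q#p) L) :: 'k) = 2^(pdeg p) * Phi p (tf (appI q L))"
    using Cons validL_appI by simp
  also have "\<dots> = 2^(pdeg p) * (2^tdeg (snd q) * Phi p (app q (tf L)))"
    using Cons.prems by (simp add: tf_appI Phi_sc)
  finally show ?case by (simp add: power_add algebra_simps)
qed

definition T1 :: "jt list" where "T1 = [JX, JY]"
definition T2 :: "jt list" where "T2 = [JJ a b. a \<leftarrow> T1, b \<leftarrow> T1]"
definition T3 :: "jt list" where "T3 = [JJ a b. a \<leftarrow> T1, b \<leftarrow> T2] @ [JJ a b. a \<leftarrow> T2, b \<leftarrow> T1]"

lemma T1_mem: "tdeg t = 1 \<Longrightarrow> t \<in> set T1"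
  using tdeg_pos by (cases t) (auto simp: T1_def, metis add_is_1 le_zero_eq not_one_le_zero tdeg_pos)



lemma N1a: "list_all (\<lambda>s. list_all (\<lambda>t. PhiI [(s,t)] Klist = 0) T3) [True,False]"
  by code_simp
lemma N1b: "list_all (\<lambda>s1. list_all (\<lambda>s2. list_all (\<lambda>t1. list_all (\<lambda>t2. PhiI [(s1,t1),(s2,t2)] Klist = 0) T2) T1) [True,False]) [True,False]"
  by code_simp
lemma N1c: "list_all (\<lambda>s1. list_all (\<lambda>s2. list_all (\<lambda>t1. list_all (\<lambda>t2. PhiI [(s1,t1),(s2,t2)] Klist = 0) T1) T2) [True,False]) [True,False]"
  by code_simp
lemma N1d: "list_all (\<lambda>s1. list_all (\<lambda>s2. list_all (\<lambda>s3. list_all (\<lambda>t1. list_all (\<lambda>t2. list_all (\<lambda>t3. PhiI [(s1,t1),(s2,t2),(s3,t3)] Klist = 0) T1) T1) T1) [True,False]) [True,False]) [True,False]"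
  by code_simp



lemma T2_mem: "tdeg t = 2 \<Longrightarrow> t \<in> set T2"
proof (cases t)
  case (JJ a b)
  assume "tdeg t = 2"
  then have "tdeg a = 1" "tdeg b = 1" using JJ tdeg_pos[of a] tdeg_pos[of b] by auto
  then show ?thesis using JJ T1_mem[of a] T1_mem[of b] by (auto simp: T2_def)
qed auto

lemma T3_mem: "tdeg t = 3 \<Longrightarrow> t \<in> set T3"
proof (cases t)
  case (JJ a b)
  assume "tdeg t = 3"
  then have "(tdeg a = 1 \<and> tdeg b = 2) \<or> (tdeg a = 2 \<and> tdeg b = 1)" using JJ tdeg_pos[of a] tdeg_pos[of b] by auto
  then show ?thesis using JJ T1_mem[of a] T1_mem[of b] T2_mem[of a] T2_mem[of b] by (auto simp: T3_def)
qed auto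

lemma listall_bool: "list_all P [True,False] \<Longrightarrow> P s" by (cases s) auto

lemma num_all: "pdeg p = 3 \<Longrightarrow> PhiI p Klist = 0"
proof (cases p)
  case Nil assume "pdeg p = 3" then show ?thesis using Nil by simp
next
  case (Cons q1 r1)
  note C1 = Cons
  assume h: "pdeg p = 3"
  obtain s1 t1 where q1: "q1 = (s1,t1)" by (cases q1)
  have d1: "1 \<le> tdeg t1" by (rule tdeg_pos)
  show ?thesis
  proof (cases r1)
    case Nil
    then have "tdeg t1 = 3" using h C1 q1 by simp
    then show ?thesis using T3_mem[of t1] N1a C1 Nil q1
      by (cases s1) (auto simp: list_all_iff)
  next
    case (Cons q2 r2)
    note C2 = Cons
    obtain s2 t2 where q2: "q2 = (s2,t2)" by (cases q2)
    have d2: "1 \<le> tdeg t2" by (rule tdeg_pos)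
    show ?thesis
    proof (cases r2)
      case Nil
      then have "(tdeg t1 = 1 \<and> tdeg t2 = 2) \<or> (tdeg t1 = 2 \<and> tdeg t2 = 1)"
        using h C1 C2 q1 q2 d1 d2 by auto
      then show ?thesis
      proof
        assume "tdeg t1 = 1 \<and> tdeg t2 = 2"
        then show ?thesis using T1_mem[of t1] T2_mem[of t2] N1b C1 C2 Nil q1 q2
          by (cases s1; cases s2) (auto simp: list_all_iff)
      next
        assume "tdeg t1 = 2 \<and> tdeg t2 = 1"
        then show ?thesis using T2_mem[of t1] T1_mem[of t2] N1c C1 C2 Nil q1 q2
          by (cases s1; cases s2) (auto simp: list_all_iff)
      qed
    next
      case (Cons q3 r3)
      note C3 = Cons
      obtain s3 t3 where q3: "q3 = (s3,t3)" by (cases q3)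
      have d3: "1 \<le> tdeg t3" by (rule tdeg_pos)
      have "pdeg r3 = 0" and e: "tdeg t1 = 1" "tdeg t2 = 1" "tdeg t3 = 1"
        using h C1 C2 C3 q1 q2 q3 d1 d2 d3 by auto
      have "r3 = []"
      proof (rule ccontr)
        assume "r3 \<noteq> []"
        then obtain q4 r4 where "r3 = q4 # r4" by (cases r3) auto
        then show False using \<open>pdeg r3 = 0\<close> tdeg_pos[of "snd q4"] by simp
      qed
      then show ?thesis using e T1_mem[of t1] T1_mem[of t2] T1_mem[of t3] N1d C1 C2 C3 q1 q2 q3
        by (cases s1; cases s2; cases s3) (auto simp: list_all_iff)
    qed
  qed
qed

lemma Phi_kelem: "(2::'k::field) \<noteq> 0 \<Longrightarrow> pdeg p = 3 \<Longrightarrow> Phi p (kelem :: 'k dias) = 0"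
proof -
  assume 2: "(2::'k) \<noteq> 0" and p: "pdeg p = 3"
  have "(of_int (PhiI p Klist) :: 'k) = 2^3 * Phi p (tf Klist)"
    using Phi_tf[OF 2 validL_Klist] p by simp
  also have "\<dots> = 2^3 * (2 * Phi p kelem)" using 2 by (simp add: tf_Klist Phi_sc)
  finally have "(16::'k) * Phi p kelem = 0" using num_all[OF p] by simp
  moreover have "(16::'k) \<noteq> 0"
  proof -
    have "(16::'k) = 2^4" by simp
    then show ?thesis using 2 power_not_zero by metis
  qed
  ultimately show ?thesis by simp
qed

lemma I_Pinv': "(2::'k::field) \<noteq> 0 \<Longrightarrow> i \<in> Iideal \<Longrightarrow> Pinv (i :: 'k dias)"
  by (rule I_Pinv) (auto simp: Phi_kelem)



section \<open>Quotient\<close>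

lemma tval_DiSJ: "tval t \<in> DiSJ"
  by (induction t) (auto intro: DiSJ.intros)

lemma kelem_DiSJ: "kelem \<in> DiSJ"
  unfolding kelem_eq by (intro DiSJ.add DiSJ.scale tval_DiSJ)

lemma I_DiSJ: "i \<in> Iideal \<Longrightarrow> i \<in> DiSJ"
  by (induction rule: Iideal.induct) (auto intro: DiSJ.intros kelem_DiSJ)

lemma dsub_as: "dsub a b = dadd a (dscale (-1) b)"
  by (simp add: dsub_def dadd_def dscale_def fun_eq_iff)

lemma dsub_self: "dsub a a = dzero" by (simp add: dsub_def dzero_def fun_eq_iff)

lemma coset_mem: "a \<in> coset a"
  by (simp add: coset_def dsub_self Iideal.zero)

lemma coset_eq: assumes "dsub a b \<in> Iideal" shows "coset a = coset b"
proof -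
  have "dsub c b \<in> Iideal" if "dsub c a \<in> Iideal" for c
  proof -
    have "dsub c b = dadd (dsub c a) (dsub a b)" by (simp add: dsub_def dadd_def fun_eq_iff)
    then show ?thesis using that assms by (simp add: Iideal.add)
  qed
  moreover have "dsub c a \<in> Iideal" if "dsub c b \<in> Iideal" for c
  proof -
    have "dsub c a = dadd (dsub c b) (dscale (-1) (dsub a b))" by (simp add: dsub_def dadd_def dscale_def fun_eq_iff)
    then show ?thesis using that assms by (simp add: Iideal.add Iideal.scale)
  qed
  ultimately show ?thesis unfolding coset_def by blast
qed

lemma rep_coset: "dsub (rep (coset a)) a \<in> Iideal"
proof -
  have "rep (coset a) \<in> coset a" unfolding rep_def by (rule someI[of _ a]) (rule coset_mem)
  then show ?thesis by (simp add: coset_def)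
qed

lemma qadd_coset: "qadd (coset a) (coset b) = coset (dadd a b)"
  unfolding qadd_def
proof (rule coset_eq)
  have "dsub (dadd (rep (coset a)) (rep (coset b))) (dadd a b) = dadd (dsub (rep (coset a)) a) (dsub (rep (coset b)) b)"
    by (simp add: dsub_def dadd_def fun_eq_iff)
  then show "dsub (dadd (rep (coset a)) (rep (coset b))) (dadd a b) \<in> Iideal"
    by (simp add: Iideal.add rep_coset)
qed

lemma qscale_coset: "qscale c (coset a) = coset (dscale c a)"
  unfolding qscale_def
proof (rule coset_eq)
  have "dsub (dscale c (rep (coset a))) (dscale c a) = dscale c (dsub (rep (coset a)) a)"
    by (simp add: dsub_def dscale_def fun_eq_iff algebra_simps)
  then show "dsub (dscale c (rep (coset a))) (dscale c a) \<in> Iideal"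
    by (simp add: Iideal.scale rep_coset)
qed

lemma ql_coset: assumes a: "a \<in> DiSJ" and b: "b \<in> DiSJ" shows "ql (coset a) (coset b) = coset (jl a b)"
  unfolding ql_def
proof (rule coset_eq)
  define i1 where "i1 = dsub (rep (coset a)) a"
  define i2 where "i2 = dsub (rep (coset b)) b"
  have i1: "i1 \<in> Iideal" and i2: "i2 \<in> Iideal" by (simp_all add: i1_def i2_def rep_coset)
  have ra: "rep (coset a) = dadd a i1" and rb: "rep (coset b) = dadd b i2"
    by (simp_all add: i1_def i2_def dsub_def dadd_def fun_eq_iff)
  have "dsub (jl (rep (coset a)) (rep (coset b))) (jl a b) = dadd (jl a i2) (dadd (jl i1 b) (jl i1 i2))"
    unfolding ra rb by (simp add: jl_add1 jl_add2) (simp add: dsub_def dadd_def fun_eq_iff)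
  also have "\<dots> \<in> Iideal"
    using a b i1 i2 I_DiSJ[OF i1] by (intro Iideal.add Iideal.ml Iideal.mr)
  finally show "dsub (jl (rep (coset a)) (rep (coset b))) (jl a b) \<in> Iideal" .
qed

lemma coset_Quot: "a \<in> DiSJ \<Longrightarrow> coset a \<in> Quot"
  by (simp add: Quot_def)

section \<open>Normal forms in an associative dialgebra\<close>

fun Rp :: "('d::ab_group_add \<Rightarrow> 'd \<Rightarrow> 'd) \<Rightarrow> (bool \<Rightarrow> 'd) \<Rightarrow> bool list \<Rightarrow> 'd" where
  "Rp dr g [] = 0" | "Rp dr g [c] = g c" | "Rp dr g (c#c'#cs) = dr (g c) (Rp dr g (c'#cs))"

fun Lp :: "('d::ab_group_add \<Rightarrow> 'd \<Rightarrow> 'd) \<Rightarrow> (bool \<Rightarrow> 'd) \<Rightarrow> bool list \<Rightarrow> 'd \<Rightarrow> 'd" where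
  "Lp dl g [] Y = Y" | "Lp dl g (c#cs) Y = dl (g c) (Lp dl g cs Y)"

definition Em :: "('d::ab_group_add \<Rightarrow> 'd \<Rightarrow> 'd) \<Rightarrow> ('d \<Rightarrow> 'd \<Rightarrow> 'd) \<Rightarrow> (bool \<Rightarrow> 'd) \<Rightarrow> mono \<Rightarrow> 'd" where
  "Em dl dr g m = Lp dl g (take (snd m) (fst m)) (Rp dr g (drop (snd m) (fst m)))"

definition evl :: "('k::field \<Rightarrow> 'd::ab_group_add \<Rightarrow> 'd) \<Rightarrow> ('d \<Rightarrow> 'd \<Rightarrow> 'd) \<Rightarrow> ('d \<Rightarrow> 'd \<Rightarrow> 'd) \<Rightarrow> (bool \<Rightarrow> 'd) \<Rightarrow> ilist \<Rightarrow> 'd" where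
  "evl smul dl dr g L = sum_list (map (\<lambda>(m,c). smul (of_int c) (Em dl dr g m)) L)"

context
  fixes smul :: "'k::field \<Rightarrow> 'd::ab_group_add \<Rightarrow> 'd" and dl dr :: "'d \<Rightarrow> 'd \<Rightarrow> 'd" and g :: "bool \<Rightarrow> 'd"
  assumes AD: "assoc_dialgebra smul dl dr"
begin

interpretation vs: vector_space smul using AD by (simp add: assoc_dialgebra_def)

lemma bl: "bilinear_op smul dl" "bilinear_op smul dr" using AD by (simp_all add: assoc_dialgebra_def)
lemma ax1: "dl (dr x y) z = dl (dl x y) z" using AD by (simp add: assoc_dialgebra_def)
lemma ax2: "dr x (dl y z) = dr x (dr y z)" using AD by (simp add: assoc_dialgebra_def)
lemma ax3: "dl (dl x y) z = dl x (dl y z)" using AD by (simp add: assoc_dialgebra_def)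
lemma ax4: "dr (dr x y) z = dr x (dr y z)" using AD by (simp add: assoc_dialgebra_def)
lemma ax5: "dr (dl x y) z = dl x (dr y z)" using AD by (simp add: assoc_dialgebra_def)

lemma dl_add1: "dl (a + b) c = dl a c + dl b c" using bl(1) by (simp add: bilinear_op_def)
lemma dl_add2: "dl a (b + c) = dl a b + dl a c" using bl(1) by (simp add: bilinear_op_def)
lemma dl_sc1: "dl (smul s a) b = smul s (dl a b)" using bl(1) by (simp add: bilinear_op_def)
lemma dl_sc2: "dl a (smul s b) = smul s (dl a b)" using bl(1) by (simp add: bilinear_op_def)
lemma dr_add1: "dr (a + b) c = dr a c + dr b c" using bl(2) by (simp add: bilinear_op_def)
lemma dr_add2: "dr a (b + c) = dr a b + dr a c" using bl(2) by (simp add: bilinear_op_def)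
lemma dr_sc1: "dr (smul s a) b = smul s (dr a b)" using bl(2) by (simp add: bilinear_op_def)
lemma dr_sc2: "dr a (smul s b) = smul s (dr a b)" using bl(2) by (simp add: bilinear_op_def)
lemma dl_z1: "dl 0 b = 0" using dl_sc1[of 0 0 b] by simp
lemma dl_z2: "dl a 0 = 0" using dl_sc2[of a 0 0] by simp
lemma dr_z1: "dr 0 b = 0" using dr_sc1[of 0 0 b] by simp
lemma dr_z2: "dr a 0 = 0" using dr_sc2[of a 0 0] by simp

lemma Rp_Cons: "w \<noteq> [] \<Longrightarrow> Rp dr g (c#w) = dr (g c) (Rp dr g w)"
  by (cases w) simp_all

lemma dl_Rp: "v \<noteq> [] \<Longrightarrow> dl (Rp dr g v) Y = Lp dl g v Y"
proof (induction v)
  case (Cons c v) then show ?case by (cases "v = []") (simp_all add: Rp_Cons ax1 ax3)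
qed simp

lemma dl_Lp: "dl (Lp dl g u Z) Y = Lp dl g u (dl Z Y)"
  by (induction u) (simp_all add: ax3)

lemma Lp_app: "Lp dl g (u@v) Y = Lp dl g u (Lp dl g v Y)"
  by (induction u) simp_all

lemma dr_Lp_left: "dr (Lp dl g u Z) W = Lp dl g u (dr Z W)"
  by (induction u) (simp_all add: ax5)

lemma dr_Rp_Rp: "s \<noteq> [] \<Longrightarrow> v \<noteq> [] \<Longrightarrow> dr (Rp dr g s) (Rp dr g v) = Rp dr g (s@v)"
proof (induction s)
  case (Cons c s) then show ?case by (cases "s = []") (simp_all add: Rp_Cons ax4)
qed simp

lemma dr_Lp_right: "w \<noteq> [] \<Longrightarrow> dr X (Lp dl g u (Rp dr g w)) = dr X (Rp dr g (u@w))"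
proof (induction u arbitrary: X)
  case Nil then show ?case by simp
next
  case (Cons c u)
  have "dr X (Lp dl g (c#u) (Rp dr g w)) = dr X (dr (g c) (Lp dl g u (Rp dr g w)))" by (simp add: ax2)
  also have "\<dots> = dr (dr X (g c)) (Lp dl g u (Rp dr g w))" by (simp add: ax4)
  also have "\<dots> = dr (dr X (g c)) (Rp dr g (u@w))" using Cons by simp
  also have "\<dots> = dr X (Rp dr g ((c#u)@w))" using Cons.prems by (simp add: ax4 Rp_Cons)
  finally show ?case .
qed

lemma E_dl: assumes "i < length u" "j < length v"
  shows "dl (Em dl dr g (u,i)) (Em dl dr g (v,j)) = Em dl dr g (u@v, length u + j)"
proof -
  have ne: "drop i u \<noteq> []" using assms by simp
  have "dl (Em dl dr g (u,i)) Y = Lp dl g u Y" for Y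
    using ne by (simp add: Em_def dl_Lp dl_Rp Lp_app[symmetric])
  then show ?thesis using assms by (simp add: Em_def Lp_app[symmetric])
qed

lemma E_dr: assumes "i < length u" "j < length v"
  shows "dr (Em dl dr g (u,i)) (Em dl dr g (v,j)) = Em dl dr g (u@v, i)"
proof -
  have ne: "drop i u \<noteq> []" "drop j v \<noteq> []" using assms by simp_all
  have "dr (Em dl dr g (u,i)) (Em dl dr g (v,j)) = Lp dl g (take i u) (dr (Rp dr g (drop i u)) (Rp dr g v))"
    using ne by (simp add: Em_def dr_Lp_left dr_Lp_right)
  also have "\<dots> = Lp dl g (take i u) (Rp dr g (drop i u @ v))"
    using ne assms by (subst dr_Rp_Rp) auto
  finally show ?thesis using assms by (simp add: Em_def)
qed

lemma vdl_Cons2': "vdl [((u,i),c)] (((v,j),d)#B) = ((u@v, length u + j), c*d) # vdl [((u,i),c)] B"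
  by (simp add: vdl_def)
lemma dvl_Cons2': "dvl [((u,i),c)] (((v,j),d)#B) = ((u@v, i), c*d) # dvl [((u,i),c)] B"
  by (simp add: dvl_def)

abbreviation "ev \<equiv> evl smul dl dr g"

lemma evl_Nil: "ev [] = 0" by (simp add: evl_def)
lemma evl_append: "ev (A@B) = ev A + ev B" by (simp add: evl_def)
lemma evl_Cons: "ev (((u,i),c)#L) = smul (of_int c) (Em dl dr g (u,i)) + ev L" by (simp add: evl_def)
lemma evl_negl: "ev (negl L) = - ev L"
  by (induction L) (auto simp: evl_def negl_def)

lemma evl_vdl1: "validL [((u,i),c)] \<Longrightarrow> validL B \<Longrightarrow> ev (vdl [((u,i),c)] B) = dl (smul (of_int c) (Em dl dr g (u,i))) (ev B)"
proof (induction B)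
  case Nil then show ?case by (simp add: evl_Nil dl_z2)
next
  case (Cons y B)
  obtain v j d where y: "y = ((v,j),d)" by (metis prod.collapse)
  show ?case using Cons y
    by (simp add: vdl_Cons2'
 evl_append evl_Cons dl_add2 dl_sc1 dl_sc2 E_dl mult.commute)
qed

lemma evl_vdl: "validL A \<Longrightarrow> validL B \<Longrightarrow> ev (vdl A B) = dl (ev A) (ev B)"
proof (induction A)
  case Nil then show ?case by (simp add: evl_Nil dl_z1)
next
  case (Cons x A)
  obtain u i c where x: "x = ((u,i),c)" by (metis prod.collapse)
  show ?case using Cons x evl_vdl1[of u i c B]
    by (simp add: vdl_Cons1[of _ A B] evl_append evl_Cons dl_add1)
qed

lemma evl_dvl1: "validL [((u,i),c)] \<Longrightarrow> validL B \<Longrightarrow> ev (dvl [((u,i),c)] B) = dr (smul (of_int c) (Em dl dr g (u,i))) (ev B)"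
proof (induction B)
  case Nil then show ?case by (simp add: evl_Nil dr_z2)
next
  case (Cons y B)
  obtain v j d where y: "y = ((v,j),d)" by (metis prod.collapse)
  show ?case using Cons y
    by (simp add: dvl_Cons2'
 evl_append evl_Cons dr_add2 dr_sc1 dr_sc2 E_dr mult.commute)
qed

lemma evl_dvl: "validL A \<Longrightarrow> validL B \<Longrightarrow> ev (dvl A B) = dr (ev A) (ev B)"
proof (induction A)
  case Nil then show ?case by (simp add: evl_Nil dr_z1)
next
  case (Cons x A)
  obtain u i c where x: "x = ((u,i),c)" by (metis prod.collapse)
  show ?case using Cons x evl_dvl1[of u i c B]
    by (simp add: dvl_Cons1[of _ A B] evl_append evl_Cons dr_add1)
qed

lemma evl_cnt: "finite S \<Longrightarrow> fst ` set L \<subseteq> S \<Longrightarrow> ev L = (\<Sum>m\<in>S. smul (of_int (cnt L m)) (Em dl dr g m))"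
proof (induction L)
  case Nil then show ?case by (simp add: evl_Nil)
next
  case (Cons x L)
  obtain m0 c where x: "x = (m0,c)" by (cases x)
  have m0: "m0 \<in> S" using Cons.prems x by auto
  have "(\<Sum>m\<in>S. smul (of_int (cnt (x#L) m)) (Em dl dr g m))
      = (\<Sum>m\<in>S. (if m0 = m then smul (of_int c) (Em dl dr g m) else 0) + smul (of_int (cnt L m)) (Em dl dr g m))"
    by (rule sum.cong) (auto simp: x vs.scale_left_distrib)
  also have "\<dots> = (\<Sum>m\<in>S. (if m0 = m then smul (of_int c) (Em dl dr g m) else 0)) + (\<Sum>m\<in>S. smul (of_int (cnt L m)) (Em dl dr g m))"
    by (simp add: sum.distrib)
  also have "(\<Sum>m\<in>S. (if m0 = m then smul (of_int c) (Em dl dr g m) else 0)) = smul (of_int c) (Em dl dr g m0)"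
    using Cons.prems(1) m0 by (simp add: sum.delta)
  finally show ?case using Cons x by (simp add: evl_def)
qed

lemma evl_eq: "(\<forall>m\<in>fst ` set (A@B). cnt A m = cnt B m) \<Longrightarrow> ev A = ev B"
proof -
  assume h: "\<forall>m\<in>fst ` set (A@B). cnt A m = cnt B m"
  have h2: "cnt A m = cnt B m" if "m \<in> fst ` set (A@B)" for m using h that by blast
  have "ev A = (\<Sum>m\<in>fst ` set (A@B). smul (of_int (cnt A m)) (Em dl dr g m))" by (rule evl_cnt) auto
  also have "\<dots> = (\<Sum>m\<in>fst ` set (A@B). smul (of_int (cnt B m)) (Em dl dr g m))" by (rule sum.cong) (simp_all only: h2)
  also have "\<dots> = ev B" by (rule evl_cnt[symmetric]) auto
  finally show ?thesis .
qed

end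



fun Dv :: "('k::field \<Rightarrow> 'd::ab_group_add \<Rightarrow> 'd) \<Rightarrow> ('d \<Rightarrow> 'd \<Rightarrow> 'd) \<Rightarrow> ('d \<Rightarrow> 'd \<Rightarrow> 'd) \<Rightarrow> (bool \<Rightarrow> 'd) \<Rightarrow> jt \<Rightarrow> 'd" where
  "Dv smul dl dr g JX = g False" | "Dv smul dl dr g JY = g True"
| "Dv smul dl dr g (JJ a b) = plus_l smul dl dr (Dv smul dl dr g a) (Dv smul dl dr g b)"

definition S1 :: "bool list \<Rightarrow> nat \<Rightarrow> ilist" where "S1 w i = [((w,i),1)]"

definition tA :: jt where "tA = JJ JX (JJ (JJ JX (JJ JX JY)) JY)"
definition tB :: jt where "tB = JJ (JJ JX (JJ JX JY)) (JJ JX JY)"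
definition zl :: ilist where "zl = tll tB @ negl (tll tA)"
definition Zid :: ilist where
  "Zid = negl (vdl Klist (S1 [True,False,True] 2))
       @ negl (vdl (S1 [False] 0) (vdl Klist (S1 [True,True] 1)))
       @ vdl (S1 [True] 0) (vdl Klist (S1 [False,True] 1))
       @ dvl (S1 [True] 0) (vdl Klist (S1 [True,False] 0))
       @ vdl (S1 [False,True] 0) (vdl Klist (S1 [True] 0))
       @ dvl (S1 [True,False] 0) (vdl Klist (S1 [True] 0))
       @ negl (dvl (S1 [True,True] 0) (vdl Klist (S1 [False] 0)))
       @ negl (dvl (S1 [True,False,True] 0) Klist)"

lemma N2: "LI zl = 4" by code_simp
lemma N3: "list_all (\<lambda>m. cnt (zl@zl) m = cnt Zid m) (map fst (zl @ zl @ Zid))" by code_simp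

context
  fixes smul :: "'k::field \<Rightarrow> 'd::ab_group_add \<Rightarrow> 'd" and dl dr :: "'d \<Rightarrow> 'd \<Rightarrow> 'd" and g :: "bool \<Rightarrow> 'd"
  assumes AD: "assoc_dialgebra smul dl dr"
begin

interpretation vs: vector_space smul using AD by (simp add: assoc_dialgebra_def)

lemma evl_Zid: "evl smul dl dr g Klist = 0 \<Longrightarrow> evl smul dl dr g Zid = 0"
  unfolding Zid_def
  by (simp add: evl_append[OF AD] evl_negl[OF AD] evl_vdl[OF AD] evl_dvl[OF AD] validL_vdl validL_Klist
      S1_def dl_z1[OF AD] dl_z2[OF AD] dr_z1[OF AD] dr_z2[OF AD])

lemma evl_tll: "(2::'k) \<noteq> 0 \<Longrightarrow> evl smul dl dr g (tll t) = smul (2^(tdeg t - 1)) (Dv smul dl dr g t)"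
proof (induction t)
  case JX then show ?case by (simp add: evl_def Em_def)
next
  case JY then show ?case by (simp add: evl_def Em_def)
next
  case (JJ a b)
  obtain a' where a': "tdeg a = Suc a'" using tdeg_pos[of a] by (cases "tdeg a") auto
  obtain b' where b': "tdeg b = Suc b'" using tdeg_pos[of b] by (cases "tdeg b") auto
  have e: "(2::'k)^(tdeg (JJ a b) - 1) * inverse 2 = 2^(tdeg a - 1) * 2^(tdeg b - 1)"
    using JJ.prems a' b' by (simp add: power_add)
  have "evl smul dl dr g (tll (JJ a b)) =
     dl (evl smul dl dr g (tll a)) (evl smul dl dr g (tll b)) + dr (evl smul dl dr g (tll b)) (evl smul dl dr g (tll a))"
    by (simp add: J2l_def evl_append[OF AD] evl_vdl[OF AD] evl_dvl[OF AD] validL_tll)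
  also have "\<dots> = smul (2^(tdeg a - 1) * 2^(tdeg b - 1)) (dl (Dv smul dl dr g a) (Dv smul dl dr g b) + dr (Dv smul dl dr g b) (Dv smul dl dr g a))"
    using JJ by (simp add: dl_sc1[OF AD] dl_sc2[OF AD] dr_sc1[OF AD] dr_sc2[OF AD] vs.scale_right_distrib mult.commute)
  also have "\<dots> = smul (2^(tdeg (JJ a b) - 1) * inverse 2) (dl (Dv smul dl dr g a) (Dv smul dl dr g b) + dr (Dv smul dl dr g b) (Dv smul dl dr g a))"
    by (simp only: e)
  also have "\<dots> = smul (2^(tdeg (JJ a b) - 1)) (Dv smul dl dr g (JJ a b))"
    by (simp only: Dv.simps plus_l_def vs.scale_scale)
  finally show ?case .
qed

end

theorem mainTheorem2:
  fixes smul :: "'k::field \<Rightarrow> 'd::ab_group_add \<Rightarrow> 'd"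
    and dl dr :: "'d \<Rightarrow> 'd \<Rightarrow> 'd"
  assumes "(2::'k) \<noteq> 0"
    and "assoc_dialgebra smul dl dr"
  shows "\<not> embeds_into_plus smul dl dr"
proof
  note two = assms(1) and AD = assms(2)
  interpret vs: vector_space smul using AD by (simp add: assoc_dialgebra_def)
  assume "embeds_into_plus smul dl dr"
  then obtain \<phi> :: "'k dias set \<Rightarrow> 'd" where inj: "inj_on \<phi> Quot"
    and hl: "\<forall>A\<in>Quot. \<forall>B\<in>Quot. \<phi> (ql A B) = plus_l smul dl dr (\<phi> A) (\<phi> B)"
    unfolding embeds_into_plus_def by blast
  define g where "g c = \<phi> (coset (dgen c))" for c
  have Dv_phi: "Dv smul dl dr g t = \<phi> (coset (tval t))" for t
  proof (induction t)
    case JX then show ?case by (simp add: g_def)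
  next
    case JY then show ?case by (simp add: g_def)
  next
    case (JJ a b)
    have "\<phi> (coset (tval (JJ a b))) = \<phi> (ql (coset (tval a)) (coset (tval b)))"
      by (simp add: ql_coset tval_DiSJ)
    also have "\<dots> = plus_l smul dl dr (\<phi> (coset (tval a))) (\<phi> (coset (tval b)))"
      using hl coset_Quot tval_DiSJ by blast
    finally show ?case using JJ by simp
  qed
  have pw: "(2::'k)^n \<noteq> 0" for n using two by simp
  have cK: "coset (tval (JJ JX JX)) = (coset (tval (JJ JY JY)) :: 'k dias set)"
  proof (rule coset_eq)
    have "dsub (tval (JJ JX JX)) (tval (JJ JY JY)) = (kelem :: 'k dias)"
      by (simp add: kelem_eq dsub_def dadd_def dscale_def fun_eq_iff del: tval.simps)
    then show "dsub (tval (JJ JX JX)) (tval (JJ JY JY)) \<in> (Iideal :: 'k dias set)" by (simp add: Iideal.gen)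
  qed
  have K0: "evl smul dl dr g Klist = 0"
    unfolding Klist_def
    using evl_tll[OF AD two, of g "JJ JX JX"] evl_tll[OF AD two, of g "JJ JY JY"] cK
    by (simp del: tll.simps Dv.simps tval.simps add: evl_append[OF AD] evl_negl[OF AD] Dv_phi)
  have "evl smul dl dr g (zl @ zl) = evl smul dl dr g Zid"
    using N3 by (intro evl_eq[OF AD]) (auto simp: list_all_iff)
  then have "evl smul dl dr g zl + evl smul dl dr g zl = 0"
    using evl_Zid[OF AD K0] by (simp add: evl_append[OF AD])
  moreover have "evl smul dl dr g zl = smul 16 (Dv smul dl dr g tB) - smul 16 (Dv smul dl dr g tA)"
    unfolding zl_def using evl_tll[OF AD two, of g tB] evl_tll[OF AD two, of g tA]
    by (simp del: tll.simps Dv.simps add: evl_append[OF AD] evl_negl[OF AD] tA_def tB_def)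
  ultimately have "smul 32 (Dv smul dl dr g tB - Dv smul dl dr g tA) = 0"
    by (simp add: vs.scale_right_diff_distrib vs.scale_left_distrib[symmetric] algebra_simps)
  moreover have "(32::'k) \<noteq> 0" using pw[of 5] by simp
  ultimately have "Dv smul dl dr g tB = Dv smul dl dr g tA" by simp
  then have "\<phi> (coset (tval tB)) = \<phi> (coset (tval tA))" by (simp add: Dv_phi)
  then have "coset (tval tB) = (coset (tval tA) :: 'k dias set)"
    using inj coset_Quot tval_DiSJ by (metis inj_onD)
  then have "tval tB \<in> (coset (tval tA) :: 'k dias set)" using coset_mem by metis
  then have mem: "dsub (tval tB) (tval tA) \<in> (Iideal :: 'k dias set)" by (simp add: coset_def)
  have "\<forall>p. pdeg p \<le> 3 \<longrightarrow> Phi p (dsub (tval tB) (tval tA) :: 'k dias) = 0"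
    using I_Pinv'[OF two mem] by (simp add: Pinv_def)
  then have "Phi [] (dsub (tval tB) (tval tA) :: 'k dias) = 0" by (metis pdeg_simps(1) zero_le)
  then have l0: "lamL Lam (dsub (tval tB) (tval tA) :: 'k dias) = 0" by simp
  have "tf zl = dscale 16 (dsub (tval tB) (tval tA) :: 'k dias)"
    unfolding zl_def using tf_tll[OF two, of tB] tf_tll[OF two, of tA]
    by (simp del: tll.simps tval.simps add: tf_append tf_negl tA_def tB_def dsub_def dadd_def dscale_def fun_eq_iff algebra_simps)
  then have "lamL Lam (tf zl :: 'k dias) = 0" using l0 by (simp add: lamL_sc)
  moreover have "lamL Lam (tf zl :: 'k dias) = 4" by (simp add: lamL_tf N2)
  moreover have "(4::'k) \<noteq> 0" using pw[of 2] by simp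
  ultimately show False by simp
qed


end
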